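(* Let $v,w\in\mathbb C\cong\mathbb R^2$ be linearly independent (with no restriction on their lengths). Let the tracer point of a Prytz planimeter of length $\ell$ traverse the closed polygonal "figure eight" with successive vertices $0,v,v+w,w,-w,-v-w,-v,0$ (base point $0$). Then the resulting holonomy $\tilde H:S^1\to S^1$ is represented by a matrix in $SU(1,1)$ of trace $2+16\operatorname{Im}^2(\bar bd)\,|ad+bc|^2>2$, where $a=\cosh\frac{|v|}{2\ell}$, $b=-\sinh\frac{|v|}{2\ell}\frac{v}{|v|}$, $c=\cosh\frac{|w|}{2\ell}$, $d=-\sinh\frac{|w|}{2\ell}\frac{w}{|w|}$. In particular $\tilde H$ has exactly two fixed points on $S^1$ (one attracting, one repelling), even though the oriented area enclosed by this loop is $0$ and the loop may be arbitrarily short. *)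

theory Defs
  imports "HOL-Analysis.Analysis"
begin

definition SU11 :: "(complex^2^2) set" where
  "SU11 = {M. M$2$2 = cnj (M$1$1) \<and> M$2$1 = cnj (M$1$2) \<and> det M = 1}"

definition moebius :: "complex^2^2 \<Rightarrow> complex \<Rightarrow> complex" where
  "moebius M z = (M$1$1 * z + M$1$2) / (M$2$1 * z + M$2$2)"

text \<open>Motion of a Prytz planimeter of length l whose tracer point follows the path gamma
  (parametrised by [0,1]): u t is the unit vector pointing from the tracer point gamma t to the
  blade (chisel edge) gamma t + l * u t; the no-slip condition says that the velocity of the blade
  is parallel to the rod, i.e. to u t. The path is only piecewise differentiable, so the
  condition is imposed outside a finite set; u is required to be continuous on [0,1].\<close>
definition prytz_motion :: "real \<Rightarrow> (real \<Rightarrow> complex) \<Rightarrow> (real \<Rightarrow> complex) \<Rightarrow> bool" where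
  "prytz_motion l \<gamma> u \<longleftrightarrow>
     continuous_on {0..1} u \<and> (\<forall>t\<in>{0..1}. norm (u t) = 1) \<and>
     (\<exists>S. finite S \<and> (\<forall>t\<in>{0<..<1} - S. \<exists>g' u'.
         (\<gamma> has_vector_derivative g') (at t) \<and> (u has_vector_derivative u') (at t) \<and>
         Im (cnj (u t) * (g' + complex_of_real l * u')) = 0))"

text \<open>The holonomy of the planimeter along gamma (the map S^1 -> S^1 sending the initial
  direction u 0 of the rod to the final direction u 1) is represented by the matrix M:
  every initial direction admits a motion, and every motion ends at moebius M applied to its
  initial direction.\<close>
definition holonomy_represented_by :: "real \<Rightarrow> (real \<Rightarrow> complex) \<Rightarrow> complex^2^2 \<Rightarrow> bool" where
  "holonomy_represented_by l \<gamma> M \<longleftrightarrow>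
     (\<forall>z. norm z = 1 \<longrightarrow> (\<exists>u. prytz_motion l \<gamma> u \<and> u 0 = z)) \<and>
     (\<forall>u. prytz_motion l \<gamma> u \<longrightarrow> u 1 = moebius M (u 0))"

definition figure_eight :: "complex \<Rightarrow> complex \<Rightarrow> real \<Rightarrow> complex" where
  "figure_eight v w = linepath 0 v +++ linepath v (v + w) +++ linepath (v + w) w +++
     linepath w (- w) +++ linepath (- w) (- v - w) +++ linepath (- v - w) (- v) +++
     linepath (- v) 0"

end

theory Submission
  imports Defs
begin

definition mat2 :: "complex \<Rightarrow> complex \<Rightarrow> complex \<Rightarrow> complex \<Rightarrow> complex^2^2" where
  "mat2 p q r s = (\<chi> i j. if i = 1 then (if j = 1 then p else q) else (if j = 1 then r else s))"

lemma mat2_nth[simp]: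
  "mat2 p q r s $ 1 $ 1 = p" "mat2 p q r s $ 1 $ 2 = q"
  "mat2 p q r s $ 2 $ 1 = r" "mat2 p q r s $ 2 $ 2 = s"
  by (simp_all add: mat2_def)

lemma mat2_eta: "M = mat2 (M$1$1) (M$1$2) (M$2$1) (M$2$2)"
  unfolding mat2_def
  by (simp add: vec_eq_iff) (metis exhaust_2)

lemma mat2_mult: "mat2 p q r s ** mat2 e f g h =
   mat2 (p*e + q*g) (p*f + q*h) (r*e + s*g) (r*f + s*h)"
  by (simp add: mat2_def matrix_matrix_mult_def vec_eq_iff UNIV_2)

lemma det_mat2: "det (mat2 p q r s) = p * s - q * r"
  by (simp add: det_2)

lemma trace_mat2: "trace (mat2 p q r s) = p + s"
  by (simp add: trace_def UNIV_2)

lemma moebius_mat2: "moebius (mat2 p q r s) z = (p*z+q)/(r*z+s)"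
  by (simp add: moebius_def)


definition Nmat :: "real \<Rightarrow> complex \<Rightarrow> complex^2^2" where
  "Nmat l D = mat2 (complex_of_real (cosh (norm D / (2 * l))))
     (- complex_of_real (sinh (norm D / (2 * l)) / norm D) * D)
     (- complex_of_real (sinh (norm D / (2 * l)) / norm D) * cnj D)
     (complex_of_real (cosh (norm D / (2 * l))))"

lemma hvd_div:
  fixes f g :: "real \<Rightarrow> complex"
  assumes f: "(f has_vector_derivative f') (at t)" and g: "(g has_vector_derivative g') (at t)"
    and nz: "g t \<noteq> 0"
  shows "((\<lambda>s. f s / g s) has_vector_derivative ((f' * g t - f t * g') / (g t)^2)) (at t)"
proof -
  have "((inverse \<circ> g) has_vector_derivative (g' * (- (inverse (g t) ^ Suc (Suc 0))))) (at t)"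
    by (rule field_vector_diff_chain_at[OF g DERIV_inverse[OF nz]])
  note ig = this
  have "((\<lambda>s. f s * inverse (g s)) has_vector_derivative
       (f t * (g' * (- (inverse (g t) ^ Suc (Suc 0)))) + f' * inverse (g t))) (at t)"
    using has_vector_derivative_mult[OF f ig[unfolded o_def]] by simp
  then have "((\<lambda>s. f s / g s) has_vector_derivative
       (f t * (g' * (- (inverse (g t) ^ Suc (Suc 0)))) + f' * inverse (g t))) (at t)"
    by (simp add: divide_inverse)
  then show ?thesis
    by (rule has_vector_derivative_eq_rhs) (use nz in \<open>simp add: field_simps power2_eq_square\<close>)
qed

lemma abs_sinh_less_cosh: "\<bar>sinh (x::real)\<bar> < cosh x"
proof -
  have "cosh x ^ 2 = sinh x ^ 2 + 1" by (rule cosh_square_eq)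
  moreover have "cosh x > 0" by simp
  ultimately show ?thesis
    by (metis abs_ge_zero abs_of_pos less_add_one power2_abs power_less_imp_less_base)
qed

lemma norm_circ_eq:
  fixes C S :: real and w :: complex
  assumes "norm w = 1"
  shows "norm (of_real C * w - of_real S) = norm (of_real C - of_real S * w)"
proof -
  have ww: "w * cnj w = 1" using assms complex_norm_square[of w] by simp
  have "of_real C * w - of_real S = w * cnj (of_real C - of_real S * w)"
    using ww by (simp add: algebra_simps)
  then have "norm (of_real C * w - of_real S) = norm w * norm (cnj (of_real C - of_real S * w))"
    by (simp only: norm_mult)
  then show ?thesis using assms by (simp only: complex_mod_cnj)
qed

lemma denom_nz:
  fixes C S :: real and w :: complex
  assumes "norm w = 1" "\<bar>S\<bar> < C"
  shows "of_real C - of_real S * w \<noteq> 0"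
proof
  assume "of_real C - of_real S * w = 0"
  then have "norm (complex_of_real C) = norm (of_real S * w)" by simp
  then show False using assms by (simp add: norm_mult)
qed

lemma alg1:
  fixes C S k w :: complex
  assumes "C - S*w \<noteq> 0"
  shows "((k/2*S*w - k/2*C) * (C - S*w) - (C*w - S) * (k/2*S - k/2*C*w)) / (C - S*w)^2
    = k/2 * (((C*w - S)/(C - S*w))^2 - 1)"
  using assms by (simp add: field_simps) algebra


lemma seg_exist:
  assumes l: "l > 0" and c0: "q - p \<noteq> 0" and z: "norm z0 = 1"
  shows "\<exists>u. prytz_motion l (linepath p q) u \<and> u 0 = z0"
proof -
  define c where "c = q - p"
  define e where "e = c / of_real (norm c)"
  define k where "k = norm c / l"
  define w where "w = z0 * cnj e"
  define Cr where "Cr = (\<lambda>t::real. cosh (k*t/2))"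
  define Sr where "Sr = (\<lambda>t::real. sinh (k*t/2))"
  define N where "N = (\<lambda>t. complex_of_real (Cr t) * w - complex_of_real (Sr t))"
  define D where "D = (\<lambda>t. complex_of_real (Cr t) - complex_of_real (Sr t) * w)"
  define F where "F = (\<lambda>t. N t / D t)"
  define u where "u = (\<lambda>t. e * F t)"
  have cnz: "c \<noteq> 0" using c0 c_def by simp
  have ne: "norm e = 1" using cnz by (simp add: e_def norm_divide)
  have ee: "cnj e * e = 1" using complex_norm_square[of e] ne by (simp add: mult.commute)
  have ce: "c = of_real (norm c) * e" using cnz by (simp add: e_def)
  have nw: "norm w = 1" using z ne by (simp add: w_def norm_mult)
  have Dnz: "D t \<noteq> 0" for t
    unfolding D_def Cr_def Sr_def by (rule denom_nz[OF nw abs_sinh_less_cosh])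
  have nF: "norm (F t) = 1" for t
    using norm_circ_eq[OF nw, of "Cr t" "Sr t"] Dnz[of t]
    by (simp add: F_def N_def D_def norm_divide)
  have FF: "cnj (F t) * F t = 1" for t
    using complex_norm_square[of "F t"] nF[of t] by (simp add: mult.commute)
  have dN: "(N has_vector_derivative (of_real (k/2 * Sr t) * w - of_real (k/2 * Cr t))) (at t)" for t
    unfolding N_def Cr_def Sr_def
    by (rule derivative_eq_intros refl | simp add: algebra_simps)+
  have dD: "(D has_vector_derivative (of_real (k/2 * Sr t) - of_real (k/2 * Cr t) * w)) (at t)" for t
    unfolding D_def Cr_def Sr_def
    by (rule derivative_eq_intros refl | simp add: algebra_simps)+
  have dF: "(F has_vector_derivative (of_real (k/2) * ((F t)^2 - 1))) (at t)" for t
  proof -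
    have "(F has_vector_derivative
      (((of_real (k/2 * Sr t) * w - of_real (k/2 * Cr t)) * D t - N t * (of_real (k/2 * Sr t) - of_real (k/2 * Cr t) * w)) / (D t)^2)) (at t)"
      unfolding F_def by (rule hvd_div[OF dN dD Dnz])
    moreover have "((of_real (k/2 * Sr t) * w - of_real (k/2 * Cr t)) * D t - N t * (of_real (k/2 * Sr t) - of_real (k/2 * Cr t) * w)) / (D t)^2
       = of_real (k/2) * ((F t)^2 - 1)"
      using alg1[of "of_real (Cr t)" "of_real (Sr t)" w "of_real k"] Dnz[of t]
      by (simp add: F_def N_def D_def mult.assoc)
    ultimately show ?thesis by (rule has_vector_derivative_eq_rhs)
  qed
  show ?thesis
  proof (intro exI conjI)
    show "u 0 = z0" using ee by (simp add: u_def F_def N_def D_def Cr_def Sr_def w_def mult.commute)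
    show "prytz_motion l (linepath p q) u"
      unfolding prytz_motion_def
    proof (intro conjI ballI exI)
      show "continuous_on {0..1} u"
        unfolding u_def
        by (intro continuous_intros continuous_at_imp_continuous_on ballI
                  has_vector_derivative_continuous[OF dF])
      show "norm (u t) = 1" for t using ne nF by (simp add: u_def norm_mult)
      show "finite {}" by simp
      fix t :: real assume "t \<in> {0<..<1} - {}"
      show "(linepath p q has_vector_derivative c) (at t)"
        using has_vector_derivative_linepath_within[of p q t UNIV] by (simp add: c_def)
      show "(u has_vector_derivative e * (of_real (k/2) * ((F t)^2 - 1))) (at t)"
        unfolding u_def by (intro derivative_intros dF)
      have lk: "complex_of_real l * of_real (k/2) = of_real (norm c / 2)"
        using l by (simp add: k_def)
      have "cnj (u t) * (c + complex_of_real l * (e * (of_real (k/2) * ((F t)^2 - 1))))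
          = of_real (norm c / 2) * (cnj (F t) + F t)"
      proof -
        have "cnj (u t) * (c + complex_of_real l * (e * (of_real (k/2) * ((F t)^2 - 1))))
            = (cnj e * e) * cnj (F t) * (of_real (norm c) + (complex_of_real l * of_real (k/2)) * ((F t)^2 - 1))"
          by (subst ce) (simp add: u_def field_simps)
        also have "\<dots> = cnj (F t) * (of_real (norm c) + of_real (norm c / 2) * ((F t)^2 - 1))"
          using ee lk by simp
        also have "\<dots> = of_real (norm c / 2) * (cnj (F t) + (cnj (F t) * F t) * F t)"
          by (simp add: field_simps power2_eq_square)
        also have "\<dots> = of_real (norm c / 2) * (cnj (F t) + F t)" using FF by simp
        finally show ?thesis .
      qed
      then have "Im (cnj (u t) * (c + complex_of_real l * (e * (of_real (k/2) * ((F t)^2 - 1)))))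
          = Im (of_real (norm c / 2) * (cnj (F t) + F t))" by (rule arg_cong)
      then show "Im (cnj (u t) * (c + complex_of_real l * (e * (of_real (k/2) * ((F t)^2 - 1))))) = 0"
        by simp
    qed
  qed
qed

lemma alg2:
  fixes C S k z z' :: complex
  assumes "C*C - S*S = 1" "z' = k/2 * (z^2 - 1)" "S*z + C \<noteq> 0"
  shows "((k/2*S*z + C*z' + k/2*C) * (S*z + C) - (C*z + S) * (k/2*C*z + S*z' + k/2*S)) / (S*z + C)^2 = 0"
proof -
  have "(k/2*S*z + C*z' + k/2*C) * (S*z + C) - (C*z + S) * (k/2*C*z + S*z' + k/2*S) =
        (C*C - S*S) * (k/2*(1 - z^2) + z')"
    by (simp add: field_simps power2_eq_square)
  also have "\<dots> = 0" unfolding assms(2) by (simp add: ring_distribs)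
  finally show ?thesis by simp
qed

lemma seg_unique:
  assumes l: "l > 0" and c0: "q - p \<noteq> 0" and m: "prytz_motion l (linepath p q) u"
  shows "u 1 = moebius (Nmat l (q - p)) (u 0)"
proof -
  define c where "c = q - p"
  define e where "e = c / of_real (norm c)"
  define k where "k = norm c / l"
  define Cr where "Cr = (\<lambda>t::real. cosh (k*t/2))"
  define Sr where "Sr = (\<lambda>t::real. sinh (k*t/2))"
  define z where "z = (\<lambda>t. u t * cnj e)"
  define Qn where "Qn = (\<lambda>t. complex_of_real (Cr t) * z t + complex_of_real (Sr t))"
  define Qd where "Qd = (\<lambda>t. complex_of_real (Sr t) * z t + complex_of_real (Cr t))"
  define Q where "Q = (\<lambda>t. Qn t / Qd t)"
  have cnz: "c \<noteq> 0" using c0 c_def by simp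
  have ne: "norm e = 1" using cnz by (simp add: e_def norm_divide)
  have ee: "cnj e * e = 1" using complex_norm_square[of e] ne by (simp add: mult.commute)
  have ce: "c = of_real (norm c) * e" using cnz by (simp add: e_def)
  from m have cont: "continuous_on {0..1} u" and nu: "\<And>t. t \<in> {0..1} \<Longrightarrow> norm (u t) = 1"
    and "\<exists>S. finite S \<and> (\<forall>t\<in>{0<..<1} - S. \<exists>g' u'.
         (linepath p q has_vector_derivative g') (at t) \<and> (u has_vector_derivative u') (at t) \<and>
         Im (cnj (u t) * (g' + complex_of_real l * u')) = 0)"
    unfolding prytz_motion_def by auto
  then obtain S where fS: "finite S" and H: "\<And>t. t \<in> {0<..<1} - S \<Longrightarrow> \<exists>g' u'.
         (linepath p q has_vector_derivative g') (at t) \<and> (u has_vector_derivative u') (at t) \<and>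
         Im (cnj (u t) * (g' + complex_of_real l * u')) = 0" by blast
  have uz: "u t = z t * e" for t using ee by (simp add: z_def mult.assoc)
  have nz: "norm (z t) = 1" if "t \<in> {0..1}" for t using nu[OF that] ne by (simp add: z_def norm_mult)
  have Qdnz: "Qd t \<noteq> 0" if "t \<in> {0..1}" for t
    using denom_nz[OF nz[OF that], of "- Sr t" "Cr t"] abs_sinh_less_cosh[of "k*t/2"]
    by (simp add: Qd_def Cr_def Sr_def add.commute)
  have contQ: "continuous_on {0..1} Q"
    unfolding Q_def Qn_def Qd_def z_def Cr_def Sr_def
    using Qdnz unfolding Qd_def z_def Cr_def Sr_def
    by (intro continuous_intros cont) auto
  have CS: "complex_of_real (Cr t) * of_real (Cr t) - of_real (Sr t) * of_real (Sr t) = 1" for t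
  proof -
    have "Cr t * Cr t - Sr t * Sr t = 1" using cosh_square_eq[of "k*t/2"]
      by (simp add: Cr_def Sr_def power2_eq_square)
    then show ?thesis by (metis of_real_1 of_real_diff of_real_mult)
  qed
  have dQ: "(Q has_vector_derivative 0) (at t)" if t: "t \<in> {0<..<1} - S" for t
  proof -
    from H[OF t] obtain g' u' where g': "(linepath p q has_vector_derivative g') (at t)"
      and u': "(u has_vector_derivative u') (at t)"
      and im: "Im (cnj (u t) * (g' + complex_of_real l * u')) = 0" by blast
    have t01: "t \<in> {0..1}" using t by auto
    have gc: "g' = c"
      using vector_derivative_unique_at[OF g' has_vector_derivative_linepath_within[of p q t UNIV]]
      by (simp add: c_def)
    have uu: "u t * cnj (u t) = 1" using complex_norm_square[of "u t"] nu[OF t01] by simp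
    have d1: "((\<lambda>s. u s * cnj (u s)) has_vector_derivative (u t * cnj u' + u' * cnj (u t))) (at t)"
      by (intro derivative_intros u')
    have d0: "((\<lambda>s. u s * cnj (u s)) has_vector_derivative 0) (at t)"
    proof (rule has_vector_derivative_transform_within_open[of "\<lambda>s. 1" 0 t "{0<..<1}"])
      show "((\<lambda>s. 1) has_vector_derivative 0) (at t)" by simp
      show "open {0<..<(1::real)}" by simp
      show "t \<in> {0<..<1}" using t by simp
      fix y :: real assume "y \<in> {0<..<1}"
      then have "norm (u y) = 1" using nu by auto
      then show "1 = u y * cnj (u y)" using complex_norm_square[of "u y"] by simp
    qed
    have sum0: "u t * cnj u' + u' * cnj (u t) = 0" using vector_derivative_unique_at[OF d1 d0] .
    define X where "X = cnj (u t) * u'"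
    have reX: "Re X = 0"
    proof -
      have "X + cnj X = 0" using sum0 by (simp add: X_def algebra_simps)
      then show ?thesis using complex_add_cnj[of X] by simp
    qed
    have Xi: "X = of_real (Im X) * \<i>" using reX by (simp add: complex_eq_iff)
    have imuc: "Im (cnj (u t) * c) = - norm c * Im (z t)"
    proof -
      have "cnj (u t) * c = of_real (norm c) * cnj (z t) * (cnj e * e)"
        by (subst ce, simp add: uz algebra_simps)
      then show ?thesis using ee by simp
    qed
    have imX: "Im X = k * Im (z t)"
    proof -
      have "Im (cnj (u t) * c) + l * Im X = 0" using im gc by (simp add: X_def algebra_simps)
      then show ?thesis using imuc l by (simp add: k_def field_simps)
    qed
    have zz: "z t * cnj (z t) = 1" using complex_norm_square[of "z t"] nz[OF t01] by simp
    have z': "(z has_vector_derivative u' * cnj e) (at t)"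
      unfolding z_def by (intro derivative_intros u')
    have z'eq: "u' * cnj e = of_real k / 2 * ((z t)^2 - 1)"
    proof -
      have "u' = u t * X" using uu by (simp add: X_def mult.assoc[symmetric])
      then have "u' * cnj e = z t * X" by (simp add: z_def algebra_simps)
      also have "\<dots> = z t * (of_real (k/2) * (z t - cnj (z t)))"
        using imX Xi by (simp add: complex_diff_cnj)
      also have "\<dots> = of_real (k/2) * ((z t)^2 - z t * cnj (z t))"
        by (simp add: field_simps power2_eq_square)
      finally show ?thesis using zz by simp
    qed
    have dC: "((\<lambda>s. complex_of_real (Cr s)) has_vector_derivative of_real k / 2 * of_real (Sr t)) (at t)"
      unfolding Cr_def Sr_def by (rule derivative_eq_intros refl | simp add: algebra_simps)+
    have dS: "((\<lambda>s. complex_of_real (Sr s)) has_vector_derivative of_real k / 2 * of_real (Cr t)) (at t)"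
      unfolding Cr_def Sr_def by (rule derivative_eq_intros refl | simp add: algebra_simps)+
    have dQn: "(Qn has_vector_derivative (of_real k/2 * of_real (Sr t) * z t + of_real (Cr t) * (u' * cnj e) + of_real k/2 * of_real (Cr t))) (at t)"
      unfolding Qn_def using has_vector_derivative_add[OF has_vector_derivative_mult[OF dC z'] dS]
      by (simp add: algebra_simps)
    have dQd: "(Qd has_vector_derivative (of_real k/2 * of_real (Cr t) * z t + of_real (Sr t) * (u' * cnj e) + of_real k/2 * of_real (Sr t))) (at t)"
      unfolding Qd_def using has_vector_derivative_add[OF has_vector_derivative_mult[OF dS z'] dC]
      by (simp add: algebra_simps)
    have "(Q has_vector_derivative
       (((of_real k/2 * of_real (Sr t) * z t + of_real (Cr t) * (u' * cnj e) + of_real k/2 * of_real (Cr t)) * Qd t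
        - Qn t * (of_real k/2 * of_real (Cr t) * z t + of_real (Sr t) * (u' * cnj e) + of_real k/2 * of_real (Sr t))) / (Qd t)^2)) (at t)"
      unfolding Q_def by (rule hvd_div[OF dQn dQd Qdnz[OF t01]])
    moreover have "(((of_real k/2 * of_real (Sr t) * z t + of_real (Cr t) * (u' * cnj e) + of_real k/2 * of_real (Cr t)) * Qd t
        - Qn t * (of_real k/2 * of_real (Cr t) * z t + of_real (Sr t) * (u' * cnj e) + of_real k/2 * of_real (Sr t))) / (Qd t)^2) = 0"
      using alg2[OF CS[of t] z'eq Qdnz[OF t01, unfolded Qd_def]]
      by (simp only: Qn_def Qd_def)
    ultimately show ?thesis by (rule has_vector_derivative_eq_rhs)
  qed
  have Q1: "Q 1 = Q 0"
  proof (rule has_derivative_zero_unique_strong_interval[of "S \<union> {0,1}" 0 1 Q])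
    show "finite (S \<union> {0,1})" using fS by simp
    show "continuous_on {0..1} Q" by (rule contQ)
    show "Q 0 = Q 0" ..
    show "(1::real) \<in> {0..1}" by simp
    fix x assume x: "x \<in> {0..1} - (S \<union> {0, 1})"
    then have "x \<in> {0<..<1} - S" by auto
    from has_vector_derivative_at_within[OF dQ[OF this]]
    show "(Q has_derivative (\<lambda>h. 0)) (at x within {0..1})"
      by (simp add: has_vector_derivative_def)
  qed
  have Q0: "Q 0 = z 0" using Qdnz[of 0] by (simp add: Q_def Qn_def Qd_def Cr_def Sr_def)
  define C1 where "C1 = Cr 1"
  define S1 where "S1 = Sr 1"
  have D1: "complex_of_real C1 - of_real S1 * z 0 \<noteq> 0"
    using denom_nz[OF nz[of 0], of S1 C1] abs_sinh_less_cosh[of "k/2"] by (simp add: C1_def S1_def Cr_def Sr_def)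
  have "Qn 1 / Qd 1 = z 0" using Q1 Q0 by (simp add: Q_def)
  then have "Qn 1 = z 0 * Qd 1" using Qdnz[of 1] by (simp add: divide_eq_eq)
  then have "z 1 * (of_real C1 - of_real S1 * z 0) = of_real C1 * z 0 - of_real S1"
    by (simp add: Qn_def Qd_def C1_def S1_def algebra_simps)
  then have z1: "z 1 = (of_real C1 * z 0 - of_real S1) / (of_real C1 - of_real S1 * z 0)"
    using D1 by (simp add: field_simps)
  have hk: "norm (q - p) / (2 * l) = k * 1 / 2" by (simp add: k_def c_def)
  have "moebius (Nmat l (q - p)) (u 0) =
      (of_real C1 * (z 0 * e) + - of_real (S1 / norm c) * c) /
      (- of_real (S1 / norm c) * cnj c * (z 0 * e) + of_real C1)"
    unfolding Nmat_def moebius_mat2 hk by (simp add: C1_def S1_def Cr_def Sr_def c_def uz)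
  also have "\<dots> = (e * (of_real C1 * z 0 - of_real S1)) / (of_real C1 - of_real S1 * z 0)"
  proof -
    have a: "- of_real (S1 / norm c) * c = - of_real S1 * e" using cnz by (simp add: e_def)
    have b: "- of_real (S1 / norm c) * cnj c = - of_real S1 * cnj e" using cnz by (simp add: e_def)
    show ?thesis unfolding a b using ee by (simp add: algebra_simps)
  qed
  also have "\<dots> = u 1" using z1 uz[of 1] by (simp add: mult.commute)
  finally show ?thesis by simp
qed

lemma mult_cnj_norm: "z * cnj z = (complex_of_real (norm z))^2"
  by (simp add: complex_norm_square[symmetric])

lemma SU11_mat2: "mat2 a b c d \<in> SU11 \<longleftrightarrow> d = cnj a \<and> c = cnj b \<and> a * d - b * c = 1"
  by (simp add: SU11_def det_mat2)

lemma SU11_cases: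
  assumes "M \<in> SU11"
  obtains a b where "M = mat2 a b (cnj b) (cnj a)" "a * cnj a - b * cnj b = 1"
proof (rule that)
  have M: "M = mat2 (M$1$1) (M$1$2) (M$2$1) (M$2$2)" by (rule mat2_eta)
  from assms have e: "M$2$2 = cnj (M$1$1)" "M$2$1 = cnj (M$1$2)" "det M = 1" by (auto simp: SU11_def)
  show "M = mat2 (M$1$1) (M$1$2) (cnj (M$1$2)) (cnj (M$1$1))" using M e by simp
  show "M$1$1 * cnj (M$1$1) - M$1$2 * cnj (M$1$2) = 1" using e by (simp add: det_2)
qed

lemma SU11_mult:
  assumes "A \<in> SU11" "B \<in> SU11" shows "A ** B \<in> SU11"
proof -
  from assms(1) obtain a b where A: "A = mat2 a b (cnj b) (cnj a)" "a * cnj a - b * cnj b = 1"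
    by (rule SU11_cases)
  from assms(2) obtain c d where B: "B = mat2 c d (cnj d) (cnj c)" "c * cnj c - d * cnj d = 1"
    by (rule SU11_cases)
  have "det (A ** B) = 1" using assms by (simp add: det_mul SU11_def)
  then show ?thesis unfolding A B mat2_mult SU11_def by (simp add: det_mat2)
qed

lemma SU11_denom:
  assumes "M \<in> SU11" "norm z = 1"
  shows "M$2$1 * z + M$2$2 \<noteq> 0"
proof -
  from assms(1) obtain a b where A: "M = mat2 a b (cnj b) (cnj a)" "a * cnj a - b * cnj b = 1"
    by (rule SU11_cases)
  have "of_real ((norm a)^2 - (norm b)^2) = (1::complex)"
    using A(2) by (simp add: mult_cnj_norm)
  then have "(norm a)^2 = (norm b)^2 + 1" by (metis add_diff_cancel_left' diff_add_cancel of_real_eq_1_iff)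
  then have nb: "norm b < norm a"
    by (metis less_add_one norm_ge_zero power_less_imp_less_base)
  show ?thesis
  proof
    assume "M$2$1 * z + M$2$2 = 0"
    then have "cnj b * z = - cnj a" using A by (simp add: add_eq_0_iff)
    then have "norm (cnj b * z) = norm (cnj a)" by simp
    then show False using nb assms(2) by (simp add: norm_mult)
  qed
qed

lemma mult_nth: "((A::complex^2^2) ** B)$i$j = A$i$1 * B$1$j + A$i$2 * B$2$j"
  by (simp add: matrix_matrix_mult_def UNIV_2)

lemma moebius_mult:
  assumes q: "B$2$1 * z + B$2$2 \<noteq> 0"
  shows "moebius (A ** B) z = moebius A (moebius B z)"
proof -
  define p where "p = B$1$1 * z + B$1$2"
  define qq where "qq = B$2$1 * z + B$2$2"
  have qq: "qq \<noteq> 0" using q qq_def by simp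
  have e1: "A$1$1*(p/qq) + A$1$2 = (A$1$1*p + A$1$2*qq)/qq" using qq by (simp add: field_simps)
  have e2: "A$2$1*(p/qq) + A$2$2 = (A$2$1*p + A$2$2*qq)/qq" using qq by (simp add: field_simps)
  have "moebius A (moebius B z) = ((A$1$1*p + A$1$2*qq)/qq) / ((A$2$1*p + A$2$2*qq)/qq)"
    unfolding moebius_def p_def[symmetric] qq_def[symmetric] e1 e2 ..
  also have "\<dots> = (A$1$1*p + A$1$2*qq) / (A$2$1*p + A$2$2*qq)"
    using qq by (simp add: divide_divide_times_eq)
  also have "\<dots> = moebius (A ** B) z"
    unfolding moebius_def mult_nth p_def qq_def by (simp add: algebra_simps)
  finally show ?thesis ..
qed

lemma Nmat_SU11: "Nmat l D \<in> SU11"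
proof (cases "D = 0")
  case True then show ?thesis by (simp add: Nmat_def SU11_mat2)
next
  case False
  have "complex_of_real (cosh (norm D / (2 * l))) * of_real (cosh (norm D / (2 * l)))
      - of_real (sinh (norm D / (2 * l)) / norm D) * of_real (sinh (norm D / (2 * l)) / norm D) * (D * cnj D) = 1"
  proof -
    have "D * cnj D = of_real ((norm D)^2)" by (simp add: mult_cnj_norm)
    moreover have "cosh (norm D / (2 * l)) * cosh (norm D / (2 * l)) -
        (sinh (norm D / (2 * l)) / norm D) * (sinh (norm D / (2 * l)) / norm D) * (norm D)^2 = 1"
      using False cosh_square_eq[of "norm D / (2 * l)"] by (simp add: field_simps power2_eq_square)
    ultimately show ?thesis by (metis of_real_1 of_real_diff of_real_mult)
  qed
  then show ?thesis unfolding Nmat_def SU11_mat2 by (simp add: algebra_simps)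
qed

lemma hvd_affine:
  fixes f g :: "real \<Rightarrow> complex"
  assumes f0: "(f has_vector_derivative f') (at x)" and x: "x = a*t + b"
    and "open U" "t \<in> U" "\<And>y. y \<in> U \<Longrightarrow> g y = f (a*y+b)"
  shows "(g has_vector_derivative (a *\<^sub>R f')) (at t)"
proof -
  have assms1: "(f has_vector_derivative f') (at (a*t + b))" using f0 x by simp
  have da: "((\<lambda>y. a*y+b) has_vector_derivative a) (at t)"
    by (rule derivative_eq_intros refl | simp)+
  have "(f \<circ> (\<lambda>y. a*y+b) has_vector_derivative a *\<^sub>R f') (at t)"
    by (rule vector_diff_chain_at[OF da]) (simp add: assms1)
  then show ?thesis
    by (rule has_vector_derivative_transform_within_open[OF _ assms(3,4)]) (simp add: assms(5))
qed

lemma Im_scale: "Im (cnj X * (a *\<^sub>R g' + complex_of_real l * (a *\<^sub>R u'))) = a * Im (cnj X * (g' + complex_of_real l * u'))"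
  by (simp add: scaleR_conv_of_real algebra_simps)

lemma motion_join:
  assumes m1: "prytz_motion l g1 u1" and m2: "prytz_motion l g2 u2" and e: "u1 1 = u2 0"
  shows "prytz_motion l (g1 +++ g2) (u1 +++ u2)"
proof -
  from m1 obtain S1 where c1: "continuous_on {0..1} u1" and n1: "\<forall>t\<in>{0..1}. norm (u1 t) = 1"
    and f1: "finite S1" and H1: "\<forall>t\<in>{0<..<1} - S1. \<exists>g' u'.
         (g1 has_vector_derivative g') (at t) \<and> (u1 has_vector_derivative u') (at t) \<and>
         Im (cnj (u1 t) * (g' + complex_of_real l * u')) = 0"
    unfolding prytz_motion_def by blast
  from m2 obtain S2 where c2: "continuous_on {0..1} u2" and n2: "\<forall>t\<in>{0..1}. norm (u2 t) = 1"
    and f2: "finite S2" and H2: "\<forall>t\<in>{0<..<1} - S2. \<exists>g' u'.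
         (g2 has_vector_derivative g') (at t) \<and> (u2 has_vector_derivative u') (at t) \<and>
         Im (cnj (u2 t) * (g' + complex_of_real l * u')) = 0"
    unfolding prytz_motion_def by blast
  define S where "S = (\<lambda>t. t/2) ` S1 \<union> (\<lambda>t. (t+1)/2) ` S2 \<union> {1/2}"
  show ?thesis unfolding prytz_motion_def
  proof (intro conjI exI[of _ S] ballI)
    show "continuous_on {0..1} (u1 +++ u2)"
      using c1 c2 e by (intro continuous_on_joinpaths) (auto simp: pathfinish_def pathstart_def)
    show "norm ((u1 +++ u2) t) = 1" if "t \<in> {0..1}" for t
      using that n1 n2 by (auto simp: joinpaths_def)
    show "finite S" using f1 f2 by (simp add: S_def)
    fix t :: real assume t: "t \<in> {0<..<1} - S"
    show "\<exists>g' u'. ((g1 +++ g2) has_vector_derivative g') (at t) \<and>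
            ((u1 +++ u2) has_vector_derivative u') (at t) \<and>
            Im (cnj ((u1 +++ u2) t) * (g' + complex_of_real l * u')) = 0"
    proof (cases "t < 1/2")
      case True
      have "2*t \<in> {0<..<1} - S1"
      proof -
        have "2*t \<notin> S1"
        proof
          assume "2*t \<in> S1"
          then have "(2*t)/2 \<in> S" unfolding S_def by blast
          then show False using t by simp
        qed
        then show ?thesis using t True by auto
      qed
      with H1 obtain g' u' where g': "(g1 has_vector_derivative g') (at (2*t))"
        and u': "(u1 has_vector_derivative u') (at (2*t))"
        and im: "Im (cnj (u1 (2*t)) * (g' + complex_of_real l * u')) = 0" by blast
      show ?thesis
      proof (intro exI conjI)
        show "((g1 +++ g2) has_vector_derivative 2 *\<^sub>R g') (at t)"
          by (rule hvd_affine[OF g', of 2 t 0 "{..<1/2}"]) (use True in \<open>auto simp: joinpaths_def\<close>)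
        show "((u1 +++ u2) has_vector_derivative 2 *\<^sub>R u') (at t)"
          by (rule hvd_affine[OF u', of 2 t 0 "{..<1/2}"]) (use True in \<open>auto simp: joinpaths_def\<close>)
        show "Im (cnj ((u1 +++ u2) t) * (2 *\<^sub>R g' + complex_of_real l * 2 *\<^sub>R u')) = 0"
          using im True by (simp only: Im_scale) (simp add: joinpaths_def)
      qed
    next
      case False
      then have t2: "t > 1/2" using t by (auto simp: S_def)
      have "2*t - 1 \<in> {0<..<1} - S2"
      proof -
        have "2*t - 1 \<notin> S2"
        proof
          assume "2*t - 1 \<in> S2"
          then have "((2*t - 1) + 1)/2 \<in> S" unfolding S_def by blast
          then show False using t by simp
        qed
        then show ?thesis using t t2 by auto
      qed
      with H2 obtain g' u' where g': "(g2 has_vector_derivative g') (at (2*t - 1))"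
        and u': "(u2 has_vector_derivative u') (at (2*t - 1))"
        and im: "Im (cnj (u2 (2*t - 1)) * (g' + complex_of_real l * u')) = 0" by blast
      show ?thesis
      proof (intro exI conjI)
        show "((g1 +++ g2) has_vector_derivative 2 *\<^sub>R g') (at t)"
          by (rule hvd_affine[OF g', of 2 t "-1" "{1/2<..}"]) (use t2 in \<open>auto simp: joinpaths_def\<close>)
        show "((u1 +++ u2) has_vector_derivative 2 *\<^sub>R u') (at t)"
          by (rule hvd_affine[OF u', of 2 t "-1" "{1/2<..}"]) (use t2 in \<open>auto simp: joinpaths_def\<close>)
        show "Im (cnj ((u1 +++ u2) t) * (2 *\<^sub>R g' + complex_of_real l * 2 *\<^sub>R u')) = 0"
          using im t2 by (simp only: Im_scale) (simp add: joinpaths_def)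
      qed
    qed
  qed
qed

lemma motion_split1:
  assumes m: "prytz_motion l (g1 +++ g2) u"
  shows "prytz_motion l g1 (\<lambda>t. u (t/2))"
proof -
  from m obtain S where c: "continuous_on {0..1} u" and n: "\<forall>t\<in>{0..1}. norm (u t) = 1"
    and f: "finite S" and H: "\<forall>t\<in>{0<..<1} - S. \<exists>g' u'.
         ((g1 +++ g2) has_vector_derivative g') (at t) \<and> (u has_vector_derivative u') (at t) \<and>
         Im (cnj (u t) * (g' + complex_of_real l * u')) = 0"
    unfolding prytz_motion_def by blast
  show ?thesis unfolding prytz_motion_def
  proof (intro conjI exI[of _ "(\<lambda>t. 2*t) ` S"] ballI)
    show "continuous_on {0..1} (\<lambda>t. u (t/2))"
      by (rule continuous_on_compose2[OF c]) (auto intro!: continuous_intros)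
    show "norm (u (t/2)) = 1" if "t \<in> {0..1}" for t using that n by auto
    show "finite ((\<lambda>t. 2*t) ` S)" using f by simp
    fix t :: real assume t: "t \<in> {0<..<1} - (\<lambda>t. 2*t) ` S"
    have "t/2 \<in> {0<..<1} - S"
    proof -
      have "t/2 \<notin> S"
      proof
        assume "t/2 \<in> S" then have "2*(t/2) \<in> (\<lambda>t. 2*t) ` S" by blast
        then show False using t by simp
      qed
      then show ?thesis using t by auto
    qed
    with H obtain g' u' where g': "((g1 +++ g2) has_vector_derivative g') (at (t/2))"
      and u': "(u has_vector_derivative u') (at (t/2))"
      and im: "Im (cnj (u (t/2)) * (g' + complex_of_real l * u')) = 0" by blast
    show "\<exists>g' u'. (g1 has_vector_derivative g') (at t) \<and> ((\<lambda>t. u (t/2)) has_vector_derivative u') (at t) \<and>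
            Im (cnj (u (t/2)) * (g' + complex_of_real l * u')) = 0"
    proof (intro exI conjI)
      show "(g1 has_vector_derivative (1/2) *\<^sub>R g') (at t)"
        by (rule hvd_affine[OF g', of "1/2" t 0 "{..<1}"]) (use t in \<open>auto simp: joinpaths_def\<close>)
      show "((\<lambda>t. u (t/2)) has_vector_derivative (1/2) *\<^sub>R u') (at t)"
        by (rule hvd_affine[OF u', of "1/2" t 0 "UNIV"]) auto
      show "Im (cnj (u (t/2)) * ((1/2) *\<^sub>R g' + complex_of_real l * (1/2) *\<^sub>R u')) = 0"
        using im by (simp only: Im_scale, simp?)
    qed
  qed
qed

lemma motion_split2:
  assumes m: "prytz_motion l (g1 +++ g2) u"
  shows "prytz_motion l g2 (\<lambda>t. u ((t+1)/2))"
proof -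
  from m obtain S where c: "continuous_on {0..1} u" and n: "\<forall>t\<in>{0..1}. norm (u t) = 1"
    and f: "finite S" and H: "\<forall>t\<in>{0<..<1} - S. \<exists>g' u'.
         ((g1 +++ g2) has_vector_derivative g') (at t) \<and> (u has_vector_derivative u') (at t) \<and>
         Im (cnj (u t) * (g' + complex_of_real l * u')) = 0"
    unfolding prytz_motion_def by blast
  show ?thesis unfolding prytz_motion_def
  proof (intro conjI exI[of _ "(\<lambda>t. 2*t - 1) ` S"] ballI)
    show "continuous_on {0..1} (\<lambda>t. u ((t+1)/2))"
      by (rule continuous_on_compose2[OF c]) (auto intro!: continuous_intros)
    show "norm (u ((t+1)/2)) = 1" if "t \<in> {0..1}" for t using that n by auto
    show "finite ((\<lambda>t. 2*t - 1) ` S)" using f by simp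
    fix t :: real assume t: "t \<in> {0<..<1} - (\<lambda>t. 2*t - 1) ` S"
    have "(t+1)/2 \<in> {0<..<1} - S"
    proof -
      have "(t+1)/2 \<notin> S"
      proof
        assume "(t+1)/2 \<in> S"
        have teq: "t = 2*((t+1)/2) - 1" by (simp add: field_simps)
        have "t \<in> (\<lambda>t. 2*t-1) ` S" by (rule image_eqI[where f="\<lambda>t. 2*t-1" and x="(t+1)/2", OF teq]) fact
        then show False using t by blast
      qed
      then show ?thesis using t by auto
    qed
    with H obtain g' u' where g': "((g1 +++ g2) has_vector_derivative g') (at ((t+1)/2))"
      and u': "(u has_vector_derivative u') (at ((t+1)/2))"
      and im: "Im (cnj (u ((t+1)/2)) * (g' + complex_of_real l * u')) = 0" by blast
    show "\<exists>g' u'. (g2 has_vector_derivative g') (at t) \<and> ((\<lambda>t. u ((t+1)/2)) has_vector_derivative u') (at t) \<and>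
            Im (cnj (u ((t+1)/2)) * (g' + complex_of_real l * u')) = 0"
    proof (intro exI conjI)
      show "(g2 has_vector_derivative (1/2) *\<^sub>R g') (at t)"
        by (rule hvd_affine[OF g', of "1/2" t "1/2" "{0<..}"]) (use t in \<open>auto simp: joinpaths_def field_simps\<close>)
      show "((\<lambda>t. u ((t+1)/2)) has_vector_derivative (1/2) *\<^sub>R u') (at t)"
        by (rule hvd_affine[OF u', of "1/2" t "1/2" "UNIV"]) (auto simp: add_divide_distrib)
      show "Im (cnj (u ((t+1)/2)) * ((1/2) *\<^sub>R g' + complex_of_real l * (1/2) *\<^sub>R u')) = 0"
        using im by (simp only: Im_scale, simp?)
    qed
  qed
qed

lemma hol_join:
  assumes h1: "holonomy_represented_by l g1 M1" and h2: "holonomy_represented_by l g2 M2"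
    and M1: "M1 \<in> SU11"
  shows "holonomy_represented_by l (g1 +++ g2) (M2 ** M1)"
  unfolding holonomy_represented_by_def
proof (intro conjI allI impI)
  fix z :: complex assume z: "norm z = 1"
  from h1 z obtain u1 where m1: "prytz_motion l g1 u1" and u10: "u1 0 = z"
    unfolding holonomy_represented_by_def by blast
  have "norm (u1 1) = 1" using m1 unfolding prytz_motion_def by auto
  with h2 obtain u2 where m2: "prytz_motion l g2 u2" and u20: "u2 0 = u1 1"
    unfolding holonomy_represented_by_def by blast
  show "\<exists>u. prytz_motion l (g1 +++ g2) u \<and> u 0 = z"
    by (intro exI[of _ "u1 +++ u2"] conjI motion_join[OF m1 m2 u20[symmetric]]) (simp add: joinpaths_def u10)
next
  fix u assume m: "prytz_motion l (g1 +++ g2) u"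
  have a: "u 1 = moebius M2 (u (1/2))"
    using h2 motion_split2[OF m] unfolding holonomy_represented_by_def by fastforce
  have b: "u (1/2) = moebius M1 (u 0)"
    using h1 motion_split1[OF m] unfolding holonomy_represented_by_def by fastforce
  have "norm (u 0) = 1" using m unfolding prytz_motion_def by auto
  then show "u 1 = moebius (M2 ** M1) (u 0)"
    using a b moebius_mult[OF SU11_denom[OF M1]] by simp
qed

lemma hyperbolic_fixed:
  assumes M: "M \<in> SU11" and tr: "Re (M$1$1) > 1"
  shows "card {z. norm z = 1 \<and> moebius M z = z} = 2 \<and>
    (\<exists>z1 z2. norm z1 = 1 \<and> norm z2 = 1 \<and> moebius M z1 = z1 \<and> moebius M z2 = z2 \<and>
       norm (deriv (moebius M) z1) < 1 \<and> norm (deriv (moebius M) z2) > 1)"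
proof -
  from M obtain \<alpha> \<beta> where Mf: "M = mat2 \<alpha> \<beta> (cnj \<beta>) (cnj \<alpha>)" and det: "\<alpha> * cnj \<alpha> - \<beta> * cnj \<beta> = 1"
    by (rule SU11_cases)
  define x where "x = Re \<alpha>"
  define y where "y = Im \<alpha>"
  have x1: "x > 1" using tr Mf by (simp add: x_def)
  have ha: "\<alpha> = of_real x + \<i> * of_real y" by (simp add: x_def y_def complex_eq_iff)
  have hca: "cnj \<alpha> = of_real x - \<i> * of_real y" by (simp add: x_def y_def complex_eq_iff)
  have "\<beta> * cnj \<beta> = \<alpha> * cnj \<alpha> - 1" by (simp add: det[symmetric])
  then have hb: "\<beta> * cnj \<beta> = of_real (x^2 + y^2 - 1)"
    using complex_mult_cnj[of \<alpha>] by (simp add: x_def y_def)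
  define \<gamma> where "\<gamma> = cnj \<beta>"
  have "x^2 > 1" using x1 by (simp add: one_less_power)
  then have pos: "x^2 + y^2 - 1 > 0" using zero_le_power2[of y] by linarith
  have gnz: "\<gamma> \<noteq> 0"
  proof
    assume "\<gamma> = 0" then have "\<beta> * cnj \<beta> = 0" by (simp add: \<gamma>_def)
    then have "complex_of_real (x^2+y^2-1) = 0" by (metis hb)
    then have "x^2+y^2-1 = 0" by (simp only: of_real_eq_0_iff)
    then show False using pos by simp
  qed
  define r where "r = sqrt (x^2 - 1)"
  have r2: "r^2 = x^2 - 1" using x1 by (simp add: r_def)
  have rpos: "r > 0" using x1 by (simp add: r_def)
  have rx: "r < x"
  proof -
    have "x^2 - 1 < x^2" by simp
    then have "r < sqrt (x^2)" unfolding r_def by (rule real_sqrt_less_mono)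
    then show ?thesis using x1 by simp
  qed
  have xr1: "(x - r) * (x + r) = 1" using r2 by (simp add: algebra_simps power2_eq_square)
  define P where "P = \<i> * of_real y + of_real r"
  define Q where "Q = \<i> * of_real y - of_real r"
  define zp where "zp = P / \<gamma>"
  define zm where "zm = Q / \<gamma>"
  have gzp: "\<gamma> * zp = P" and gzm: "\<gamma> * zm = Q" using gnz by (simp_all add: zp_def zm_def)
  have mo: "moebius M z = (\<alpha> * z + \<beta>) / (\<gamma> * z + cnj \<alpha>)" for z
    by (simp add: Mf moebius_mat2 \<gamma>_def)
  have denp: "\<gamma> * zp + cnj \<alpha> = of_real (x + r)" using gzp by (simp add: hca P_def)
  have denm: "\<gamma> * zm + cnj \<alpha> = of_real (x - r)" using gzm by (simp add: hca Q_def)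
  have bg: "\<beta> * \<gamma> = of_real x ^ 2 + of_real y ^ 2 - 1" using hb by (simp add: \<gamma>_def)
  have r2c: "(complex_of_real r)^2 = of_real x ^ 2 - 1"
    by (metis of_real_1 of_real_diff of_real_power r2)
  have ii: "\<i> * \<i> = -1" by simp
  have xr0: "complex_of_real (x + r) \<noteq> 0" using rpos x1 by (subst of_real_eq_0_iff) simp
  have xm0: "complex_of_real (x - r) \<noteq> 0" using rx by (subst of_real_eq_0_iff) simp
  have fixp: "moebius M zp = zp"
  proof -
    have "\<gamma> * (\<alpha> * zp + \<beta> - zp * of_real (x + r)) = 0"
      using gzp bg r2c ii unfolding ha P_def of_real_add by algebra
    then have "\<alpha> * zp + \<beta> = zp * of_real (x + r)" using gnz by simp
    then show ?thesis using xr0 unfolding mo denp by simp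
  qed
  have fixm: "moebius M zm = zm"
  proof -
    have "\<gamma> * (\<alpha> * zm + \<beta> - zm * of_real (x - r)) = 0"
      using gzm bg r2c ii unfolding ha Q_def of_real_diff by algebra
    then have "\<alpha> * zm + \<beta> = zm * of_real (x - r)" using gnz by simp
    then show ?thesis using xm0 unfolding mo denm by simp
  qed
  have nb: "norm \<gamma> = sqrt (x^2 + y^2 - 1)"
  proof -
    have "(complex_of_real (norm \<beta>))^2 = of_real (x^2 + y^2 - 1)" using hb by (simp add: mult_cnj_norm)
    then have "(norm \<beta>)^2 = x^2 + y^2 - 1" by (metis of_real_eq_iff of_real_power)
    then show ?thesis by (simp add: \<gamma>_def real_sqrt_unique)
  qed
  have nP: "norm P = sqrt (x^2 + y^2 - 1)"
    unfolding P_def using r2 by (simp add: cmod_def algebra_simps)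
  have nQ: "norm Q = sqrt (x^2 + y^2 - 1)"
    unfolding Q_def using r2 by (simp add: cmod_def algebra_simps)
  have nzp: "norm zp = 1" using nb nP pos by (simp add: zp_def norm_divide)
  have nzm: "norm zm = 1" using nb nQ pos by (simp add: zm_def norm_divide)
  have dmo: "(moebius M has_field_derivative 1 / (\<gamma> * z + cnj \<alpha>)^2) (at z)" if nz: "\<gamma> * z + cnj \<alpha> \<noteq> 0" for z
  proof -
    have e: "moebius M = (\<lambda>z. (\<alpha> * z + \<beta>) / (\<gamma> * z + cnj \<alpha>))" using mo by (rule ext)
    have d1: "((\<lambda>z. \<alpha> * z + \<beta>) has_field_derivative \<alpha>) (at z)"
      using DERIV_add[OF DERIV_cmult[OF DERIV_ident, of \<alpha>] DERIV_const[of \<beta>]] by simp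
    have d2: "((\<lambda>z. \<gamma> * z + cnj \<alpha>) has_field_derivative \<gamma>) (at z)"
      using DERIV_add[OF DERIV_cmult[OF DERIV_ident, of \<gamma>] DERIV_const[of "cnj \<alpha>"]] by simp
    have "((\<lambda>z. (\<alpha> * z + \<beta>) / (\<gamma> * z + cnj \<alpha>)) has_field_derivative
       ((\<alpha> * (\<gamma> * z + cnj \<alpha>) - (\<alpha> * z + \<beta>) * \<gamma>) / ((\<gamma> * z + cnj \<alpha>) * (\<gamma> * z + cnj \<alpha>)))) (at z)"
      by (rule DERIV_divide[OF d1 d2 nz])
    moreover have "(\<alpha> * (\<gamma> * z + cnj \<alpha>) - (\<alpha> * z + \<beta>) * \<gamma>) = 1"
      using det by (simp add: \<gamma>_def algebra_simps)
    ultimately show ?thesis unfolding e by (simp add: power2_eq_square)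
  qed
  have derp: "deriv (moebius M) zp = of_real (1 / (x + r)^2)"
    using DERIV_imp_deriv[OF dmo[of zp]] xr0 unfolding denp by simp
  have derm: "deriv (moebius M) zm = of_real (1 / (x - r)^2)"
    using DERIV_imp_deriv[OF dmo[of zm]] xm0 unfolding denm by simp
  have ndp: "norm (deriv (moebius M) zp) < 1"
  proof -
    have "1 < x + r" using x1 rpos by simp
    then have "1 < (x + r)^2" by (intro one_less_power) auto
    then show ?thesis unfolding derp norm_of_real by (simp add: divide_less_eq)
  qed
  have ndm: "norm (deriv (moebius M) zm) > 1"
  proof -
    have xr: "x - r = 1 / (x + r)" using xr1 x1 rpos by (simp add: field_simps)
    have "1 < x + r" using x1 rpos by simp
    then have "x - r < 1" unfolding xr by simp
    then have "(x - r)^2 < 1" using rx by (subst power_less_one_iff) auto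
    moreover have "(x - r)^2 > 0" using rx by simp
    ultimately show ?thesis unfolding derm norm_of_real by (simp add: less_divide_eq)
  qed
  have neq: "zp \<noteq> zm"
  proof
    assume "zp = zm" then have "P = Q" using gzp gzm by simp
    then show False using rpos by (simp add: P_def Q_def complex_eq_iff)
  qed
  have set: "{z. norm z = 1 \<and> moebius M z = z} = {zp, zm}"
  proof (intro equalityI subsetI)
    fix z assume "z \<in> {z. norm z = 1 \<and> moebius M z = z}"
    then have nz: "norm z = 1" and fz: "moebius M z = z" by auto
    have dnz: "\<gamma> * z + cnj \<alpha> \<noteq> 0" using SU11_denom[OF M nz] by (simp add: Mf \<gamma>_def)
    have eq: "\<alpha> * z + \<beta> = z * (\<gamma> * z + cnj \<alpha>)" using fz dnz unfolding mo by (simp add: field_simps)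
    have amc: "\<alpha> - cnj \<alpha> = 2 * \<i> * of_real y" by (simp add: complex_diff_cnj y_def)
    have q0: "\<gamma> * z * z - (\<alpha> - cnj \<alpha>) * z - \<beta> = 0" using eq by (simp add: algebra_simps)
    have "\<gamma> * (\<gamma> * ((z - zp) * (z - zm))) = \<gamma> * (\<gamma> * z * z - (2 * \<i> * of_real y) * z - \<beta>)"
      using gzp gzm bg r2c ii unfolding P_def Q_def by algebra
    also have "\<dots> = 0" using q0 unfolding amc by simp
    finally have "(z - zp) * (z - zm) = 0" using gnz by simp
    then show "z \<in> {zp, zm}" by auto
  qed (use nzp nzm fixp fixm in auto)
  show ?thesis
    using neq nzp nzm fixp fixm ndp ndm unfolding set by auto
qed

lemma trace_id:
  fixes a b bc c d dc :: complex
  assumes "a*a - b*bc = 1" "c*c - d*dc = 1"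
  shows "trace (mat2 a b bc a ** mat2 c d dc c ** mat2 a (-b) (-bc) a ** mat2 (c*c+d*dc) (-2*c*d) (-2*c*dc) (c*c+d*dc)
     ** mat2 a (-b) (-bc) a ** mat2 c d dc c ** mat2 a b bc a) =
    2 - 4*(bc*d - b*dc)^2*(a*d+b*c)*(a*dc+bc*c)"
  using assms unfolding mat2_mult trace_mat2 by algebra

lemma hol_line:
  assumes "l > 0" "q - p = D" "D \<noteq> 0"
  shows "holonomy_represented_by l (linepath p q) (Nmat l D)"
  unfolding holonomy_represented_by_def
  using seg_exist[of l q p] seg_unique[of l q p] assms by auto

lemma indep_facts:
  fixes v w :: complex
  assumes ind: "\<forall>s t :: real. s *\<^sub>R v + t *\<^sub>R w = 0 \<longrightarrow> s = 0 \<and> t = 0"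
  shows "v \<noteq> 0" "w \<noteq> 0" "Im (cnj v * w) \<noteq> 0"
    "\<And>\<alpha> \<beta>. \<alpha> > 0 \<Longrightarrow> \<beta> > 0 \<Longrightarrow> complex_of_real \<alpha> * w + complex_of_real \<beta> * v \<noteq> 0"
proof -
  show v0: "v \<noteq> 0" using ind[rule_format, of 1 0] by (simp, blast)
  show "w \<noteq> 0" using ind[rule_format, of 0 1] by (simp, blast)
  show "Im (cnj v * w) \<noteq> 0"
  proof
    assume im: "Im (cnj v * w) = 0"
    define s where "s = Re (cnj v * w)"
    have cw: "cnj v * w = of_real s" using im by (simp add: s_def complex_eq_iff)
    have "(of_real (norm v))^2 * w = v * (cnj v * w)" by (simp add: mult_cnj_norm[symmetric] mult.assoc)
    also have "\<dots> = of_real s * v" using cw by (simp add: mult.commute)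
    finally have "of_real s * v = (of_real (norm v))^2 * w" by simp
    then have lin: "s *\<^sub>R v + (-(norm v * norm v)) *\<^sub>R w = 0" by (simp add: scaleR_conv_of_real power2_eq_square)
    have "-(norm v * norm v) = 0" using ind[rule_format, OF lin] by simp
    then show False using v0 by simp
  qed
  fix \<alpha> \<beta> :: real assume "\<alpha> > 0" "\<beta> > 0"
  show "complex_of_real \<alpha> * w + complex_of_real \<beta> * v \<noteq> 0"
  proof
    assume "complex_of_real \<alpha> * w + complex_of_real \<beta> * v = 0"
    then have lin: "\<beta> *\<^sub>R v + \<alpha> *\<^sub>R w = 0" by (simp add: scaleR_conv_of_real add.commute)
    show False using ind[rule_format, OF lin] \<open>\<beta> > 0\<close> by simp
  qed
qed

lemma Nmat_eq:
  assumes "D \<noteq> 0"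
  shows "Nmat l D = mat2 (of_real (cosh (norm D / (2*l)))) (- of_real (sinh (norm D / (2 * l)) / norm D) * D)
     (cnj (- of_real (sinh (norm D / (2 * l)) / norm D) * D)) (of_real (cosh (norm D / (2*l))))"
  by (simp add: Nmat_def)

lemma Nmat_neg:
  "Nmat l (-D) = mat2 (of_real (cosh (norm D / (2*l)))) (- (- of_real (sinh (norm D / (2 * l)) / norm D) * D))
     (- cnj (- of_real (sinh (norm D / (2 * l)) / norm D) * D)) (of_real (cosh (norm D / (2*l))))"
  by (simp add: Nmat_def)

lemma Nmat_double:
  fixes D :: complex and l :: real
  assumes "D \<noteq> 0"
  defines "c \<equiv> complex_of_real (cosh (norm D / (2*l)))"
  defines "d \<equiv> - complex_of_real (sinh (norm D / (2 * l)) / norm D) * D"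
  shows "Nmat l (- D - D) = mat2 (c*c + d*cnj d) (-2*c*d) (-2*c*cnj d) (c*c + d*cnj d)"
proof -
  define s where "s = norm D / (2*l)"
  have n: "norm (- D - D) = 2 * norm D"
  proof -
    have "- D - D = (-2) * D" by simp
    then show ?thesis by (simp add: norm_mult)
  qed
  have arg: "norm (- D - D) / (2*l) = 2 * s" using n by (simp add: s_def)
  have dd: "d * cnj d = of_real ((sinh s)^2)"
    using assms(1) by (simp add: d_def s_def mult_cnj_norm power2_eq_square field_simps)
  have e11: "complex_of_real (cosh (norm (- D - D) / (2*l))) = c*c + d*cnj d"
    unfolding arg cosh_double dd by (simp add: c_def s_def power2_eq_square)
  have hc: "c = of_real (cosh s)" by (simp add: c_def s_def)
  have hd: "d = - of_real (sinh s / norm D) * D" by (simp add: d_def s_def)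
  have r1: "complex_of_real (2 * sinh s * cosh s / (2 * norm D)) = of_real (cosh s) * of_real (sinh s / norm D)"
    by simp
  have e12: "- complex_of_real (sinh (norm (- D - D) / (2 * l)) / norm (- D - D)) * (- D - D) = -2*c*d"
    unfolding arg sinh_double unfolding n r1 hc hd by (simp only: mult_minus_left mult_minus_right minus_minus) (simp add: algebra_simps)
  have c1: "cnj (- D - D) = -2 * cnj D" by simp
  have c2: "cnj (- of_real (sinh s / norm D) * D) = - of_real (sinh s / norm D) * cnj D" by simp
  have e21: "- complex_of_real (sinh (norm (- D - D) / (2 * l)) / norm (- D - D)) * cnj (- D - D) = -2*c*cnj d"
    unfolding arg sinh_double unfolding n r1 hc hd c1 c2 by (simp only: mult_minus_left mult_minus_right minus_minus) (simp add: algebra_simps)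
  show ?thesis unfolding Nmat_def e11 e12 e21 ..
qed

lemma aux_T: "2 - 4 * (complex_of_real (2 * X) * \<i>)^2 * (complex_of_real N)^2
   = complex_of_real (2 + 16 * X^2 * N^2)"
  by (simp add: power_mult_distrib algebra_simps)

lemma main_aux:
  fixes v w :: complex and l :: real
  assumes l: "l > 0" and ind: "\<forall>s t :: real. s *\<^sub>R v + t *\<^sub>R w = 0 \<longrightarrow> s = 0 \<and> t = 0"
    and a: "a = complex_of_real (cosh (norm v / (2 * l)))"
    and b: "b = - complex_of_real (sinh (norm v / (2 * l)) / norm v) * v"
    and c: "c = complex_of_real (cosh (norm w / (2 * l)))"
    and d: "d = - complex_of_real (sinh (norm w / (2 * l)) / norm w) * w"
    and T: "T = 2 + 16 * (Im (cnj b * d))\<^sup>2 * (norm (a * d + b * c))\<^sup>2"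
  shows "\<exists>M \<in> SU11. holonomy_represented_by l (figure_eight v w) M \<and>
              trace M = complex_of_real T \<and> T > 2 \<and>
              card {z. norm z = 1 \<and> moebius M z = z} = 2 \<and>
              (\<exists>z1 z2. norm z1 = 1 \<and> norm z2 = 1 \<and> moebius M z1 = z1 \<and> moebius M z2 = z2 \<and>
                 norm (deriv (moebius M) z1) < 1 \<and> norm (deriv (moebius M) z2) > 1)"
proof -
  have v0: "v \<noteq> 0" and w0: "w \<noteq> 0" and imvw: "Im (cnj v * w) \<noteq> 0"
    and lc: "\<And>\<alpha> \<beta>. \<alpha> > 0 \<Longrightarrow> \<beta> > 0 \<Longrightarrow> complex_of_real \<alpha> * w + complex_of_real \<beta> * v \<noteq> 0"
    using indep_facts[OF ind] by auto
  have mw: "- w - w \<noteq> 0"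
  proof
    assume "- w - w = 0"
    then have "2 * w = 0" by (simp add: algebra_simps)
    then show False using w0 by simp
  qed
  define H where "H = Nmat l v ** Nmat l w ** Nmat l (-v) ** Nmat l (-w - w) ** Nmat l (-v) ** Nmat l w ** Nmat l v"
  have hol: "holonomy_represented_by l (figure_eight v w) H"
    unfolding figure_eight_def H_def
    by (intro hol_join hol_line Nmat_SU11) (use l v0 w0 mw in simp_all)
  have SU: "H \<in> SU11" unfolding H_def by (intro SU11_mult Nmat_SU11)
  define x where "x = norm v / (2 * l)"
  define y where "y = norm w / (2 * l)"
  have NA: "Nmat l v = mat2 a b (cnj b) a" unfolding a b by (simp add: Nmat_def)
  have NA': "Nmat l (-v) = mat2 a (-b) (-cnj b) a" unfolding a b by (simp add: Nmat_def)
  have NB: "Nmat l w = mat2 c d (cnj d) c" unfolding c d by (simp add: Nmat_def)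
  have NB2: "Nmat l (-w - w) = mat2 (c*c + d*cnj d) (-2*c*d) (-2*c*cnj d) (c*c + d*cnj d)"
    using Nmat_double[OF w0, of l] unfolding c d .
  have bb: "b * cnj b = of_real ((sinh x)^2)"
    using v0 by (simp add: b x_def mult_cnj_norm power2_eq_square field_simps)
  have dd: "d * cnj d = of_real ((sinh y)^2)"
    using w0 by (simp add: d y_def mult_cnj_norm power2_eq_square field_simps)
  have hab: "a * a - b * cnj b = 1"
  proof -
    have "cosh x * cosh x - (sinh x)^2 = 1" using cosh_square_eq[of x] by (simp add: power2_eq_square)
    then have "complex_of_real (cosh x * cosh x - (sinh x)^2) = 1" by simp
    then show ?thesis unfolding bb by (simp add: a x_def)
  qed
  have hcd: "c * c - d * cnj d = 1"
  proof -
    have "cosh y * cosh y - (sinh y)^2 = 1" using cosh_square_eq[of y] by (simp add: power2_eq_square)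
    then have "complex_of_real (cosh y * cosh y - (sinh y)^2) = 1" by simp
    then show ?thesis unfolding dd by (simp add: c y_def)
  qed
  have trH: "trace H = 2 - 4*(cnj b*d - b*cnj d)^2*(a*d+b*c)*(a*cnj d+cnj b*c)"
    unfolding H_def NA NA' NB NB2 by (rule trace_id[OF hab hcd])
  have k1: "cnj b*d - b*cnj d = of_real (2 * Im (cnj b * d)) * \<i>"
    using complex_diff_cnj[of "cnj b * d"] by simp
  have k2: "a*cnj d + cnj b*c = cnj (a*d + b*c)" by (simp add: a c)
  have trT: "trace H = complex_of_real T"
  proof -
    have "trace H = 2 - 4 * (of_real (2 * Im (cnj b * d)) * \<i>)^2 * ((a*d+b*c) * cnj (a*d+b*c))"
      unfolding trH k1 k2[symmetric] by (simp add: mult.assoc)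
    also have "\<dots> = complex_of_real T"
      unfolding mult_cnj_norm T by (rule aux_T)
    finally show ?thesis .
  qed
  define sv where "sv = sinh x / norm v"
  define sw where "sw = sinh y / norm w"
  have svp: "sv > 0" using v0 l by (simp add: sv_def x_def)
  have swp: "sw > 0" using w0 l by (simp add: sw_def y_def)
  have cbd: "cnj b * d = of_real (sv * sw) * (cnj v * w)"
    by (simp add: b d sv_def sw_def x_def y_def)
  have im0: "Im (cnj b * d) \<noteq> 0" using imvw svp swp unfolding cbd by simp
  have adbc: "a * d + b * c \<noteq> 0"
  proof -
    have "a * d + b * c = - (of_real (cosh x * sw) * w + of_real (sv * cosh y) * v)"
      by (simp add: a b c d sv_def sw_def x_def y_def algebra_simps)
    moreover have "of_real (cosh x * sw) * w + of_real (sv * cosh y) * v \<noteq> 0"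
      using svp swp by (intro lc) (auto intro: mult_pos_pos)
    ultimately show ?thesis by (metis neg_equal_0_iff_equal)
  qed
  have T2: "T > 2"
  proof -
    have "(Im (cnj b * d))\<^sup>2 > 0" using im0 by simp
    moreover have "(norm (a * d + b * c))\<^sup>2 > 0" using adbc by simp
    ultimately show ?thesis unfolding T by simp
  qed
  have ReH: "Re (H$1$1) > 1"
  proof -
    have "H$2$2 = cnj (H$1$1)" using SU by (simp add: SU11_def)
    then have "trace H = complex_of_real (2 * Re (H$1$1))"
      by (subst mat2_eta[of H]) (simp add: trace_mat2 complex_add_cnj)
    then have "2 * Re (H$1$1) = T" using trT by (simp only: of_real_eq_iff)
    then show ?thesis using T2 by simp
  qed
  show ?thesis
    using SU hol trT T2 hyperbolic_fixed[OF SU ReH] by blast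
qed

theorem mainTheorem8:
  fixes v w :: complex and l :: real
  assumes "l > 0"
    and "\<forall>s t :: real. s *\<^sub>R v + t *\<^sub>R w = 0 \<longrightarrow> s = 0 \<and> t = 0"
  shows "let a = complex_of_real (cosh (norm v / (2 * l)));
             b = - complex_of_real (sinh (norm v / (2 * l)) / norm v) * v;
             c = complex_of_real (cosh (norm w / (2 * l)));
             d = - complex_of_real (sinh (norm w / (2 * l)) / norm w) * w;
             T = 2 + 16 * (Im (cnj b * d))\<^sup>2 * (norm (a * d + b * c))\<^sup>2
         in \<exists>M \<in> SU11. holonomy_represented_by l (figure_eight v w) M \<and>
              trace M = complex_of_real T \<and> T > 2 \<and>
              card {z. norm z = 1 \<and> moebius M z = z} = 2 \<and>
              (\<exists>z1 z2. norm z1 = 1 \<and> norm z2 = 1 \<and> moebius M z1 = z1 \<and> moebius M z2 = z2 \<and>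
                 norm (deriv (moebius M) z1) < 1 \<and> norm (deriv (moebius M) z2) > 1)"
  unfolding Let_def by (rule main_aux[OF assms refl refl refl refl refl])

end
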